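(* Let $A_0$ be a commutative Noetherian ring, $d_1,\dots,d_g\in\mathbb{N}$, and let $A=A_0[Y_1,\dots,Y_g]$ be $\mathbb{Z}^2$-graded by $\deg Y_j=(d_j,1)$. Let $N$ be a finitely generated $\mathbb{Z}^2$-graded $A$-module and $\rho_N(v)=\sup\{i\in\mathbb{Z} : N_{(i,v)}\neq0\}$. Then there exists $v_0$ such that either $\rho_N(v)=-\infty$ for all $v\ge v_0$, or there are $\delta\in\{d_1,\dots,d_g\}$ and $c\in\mathbb{Z}$ with $\rho_N(v)=\delta v+c$ for all $v\ge v_0$.
   Context: Elements of $A_0$ have degree $(0,0)$; the supremum of the empty set is $-\infty$. *)

theory Defs
  imports "HOL-Library.Poly_Mapping" "HOL-Library.Extended_Real"
begin

(* A commutative ring is Noetherian if every ideal is finitely generated.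
  Ideals of r are the submodules of r over itself.*)
definition noetherian :: "'r::comm_ring_1 itself \<Rightarrow> bool" where
  "noetherian _ \<longleftrightarrow>
     (\<forall>I::'r set. module.subspace ((*) :: 'r \<Rightarrow> 'r \<Rightarrow> 'r) I \<longrightarrow>
        (\<exists>F. finite F \<and> I = module.span ((*) :: 'r \<Rightarrow> 'r \<Rightarrow> 'r) F))"

(* The polynomial ring A = A0[Y_j | j :: 'g] is the type ('g => nat) => 'r
  (monomials = exponent vectors).*)
definition monodeg :: "('g::finite \<Rightarrow> nat) \<Rightarrow> ('g \<Rightarrow>\<^sub>0 nat) \<Rightarrow> int \<times> int" where
  "monodeg d \<alpha> = ((\<Sum>j\<in>UNIV. int (Poly_Mapping.lookup \<alpha> j) * int (d j)), (\<Sum>j\<in>UNIV. int (Poly_Mapping.lookup \<alpha> j)))"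

definition Ahom :: "('g::finite \<Rightarrow> nat) \<Rightarrow> int \<times> int \<Rightarrow> (('g \<Rightarrow>\<^sub>0 nat) \<Rightarrow>\<^sub>0 'r::comm_ring_1) set" where
  "Ahom d a = {p. \<forall>\<alpha>\<in>Poly_Mapping.keys p. monodeg d \<alpha> = a}"

definition const :: "'r::comm_ring_1 \<Rightarrow> ('g \<Rightarrow>\<^sub>0 nat) \<Rightarrow>\<^sub>0 'r" where
  "const a = Poly_Mapping.single 0 a"

(* A Z^2-graded A-module: the module is the type 'm with scalar action sc,
  Nc k is the homogeneous component N_k (an A0-submodule), N is the internal
  direct sum of the N_k, and A_a N_b \<subseteq> N_(a+b).*)
definition graded_module ::
  "('g::finite \<Rightarrow> nat) \<Rightarrow> ((('g \<Rightarrow>\<^sub>0 nat) \<Rightarrow>\<^sub>0 'r::comm_ring_1) \<Rightarrow> 'm::ab_group_add \<Rightarrow> 'm)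
     \<Rightarrow> (int \<times> int \<Rightarrow> 'm set) \<Rightarrow> bool" where
  "graded_module d sc Nc \<longleftrightarrow>
     module sc \<and>
     (\<forall>k. module.subspace (\<lambda>a. sc (const a)) (Nc k)) \<and>
     (\<forall>x. \<exists>!h. finite {k. h k \<noteq> 0} \<and> (\<forall>k. h k \<in> Nc k) \<and> x = (\<Sum>k\<in>{k. h k \<noteq> 0}. h k)) \<and>
     (\<forall>p x a b. p \<in> Ahom d a \<longrightarrow> x \<in> Nc b \<longrightarrow> sc p x \<in> Nc (fst a + fst b, snd a + snd b))"

definition finitely_generated :: "('a::comm_ring_1 \<Rightarrow> 'm::ab_group_add \<Rightarrow> 'm) \<Rightarrow> bool" where
  "finitely_generated sc \<longleftrightarrow> (\<exists>F. finite F \<and> module.span sc F = UNIV)"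

(* rho_N(v) = sup {i. N_(i,v) \<noteq> 0}, with sup of the empty set = -\<infinity>.*)
definition rho :: "(int \<times> int \<Rightarrow> 'm::zero set) \<Rightarrow> int \<Rightarrow> ereal" where
  "rho Nc v = Sup ((\<lambda>i. ereal (of_int i)) ` {i. Nc (i, v) \<noteq> {0}})"

end

theory Submission
  imports Defs
begin

lemma nat_incseq_subseq:
  fixes u :: "nat \<Rightarrow> nat"
  shows "\<exists>g. strict_mono g \<and> incseq (\<lambda>n. u (g n))"
proof -
  obtain f where f: "strict_mono f" "monoseq (\<lambda>n. u (f n))" using seq_monosub by blast
  show ?thesis
  proof (cases "incseq (\<lambda>n. u (f n))")
    case True then show ?thesis using f by blast
  next
    case False
    then have dec: "decseq (\<lambda>n. u (f n))" using f(2) by (simp add: monoseq_iff)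
    define m where "m = (LEAST x. x \<in> range (\<lambda>n. u (f n)))"
    have "m \<in> range (\<lambda>n. u (f n))" unfolding m_def by (rule LeastI[of _ "u (f 0)"]) simp
    then obtain N where N: "u (f N) = m" by auto
    have cst: "u (f n) = m" if "n \<ge> N" for n
    proof -
      have "u (f n) \<le> u (f N)" using dec that by (simp add: decseq_def)
      moreover have "m \<le> u (f n)" unfolding m_def by (rule Least_le) simp
      ultimately show ?thesis using N by simp
    qed
    have "strict_mono (\<lambda>n. f (n + N))" using f(1) by (simp add: strict_mono_def)
    moreover have "incseq (\<lambda>n. u (f (n + N)))" using cst by (simp add: incseq_def)
    ultimately show ?thesis by blast
  qed
qed

lemma dickson_aux:
  fixes s :: "nat \<Rightarrow> ('g \<Rightarrow> nat)"
  assumes "finite S"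
  shows "\<exists>f. strict_mono f \<and> (\<forall>j\<in>S. incseq (\<lambda>n. s (f n) j))"
  using assms
proof (induction S rule: finite_induct)
  case empty
  show ?case by (rule exI[of _ id]) (simp add: strict_mono_def)
next
  case (insert x S)
  then obtain f where f: "strict_mono f" "\<forall>j\<in>S. incseq (\<lambda>n. s (f n) j)" by blast
  obtain g where g: "strict_mono g" "incseq (\<lambda>n. s (f (g n)) x)"
    using nat_incseq_subseq[of "\<lambda>n. s (f n) x"] by blast
  have "strict_mono (\<lambda>n. f (g n))" using f(1) g(1) by (simp add: strict_mono_def)
  moreover have "incseq (\<lambda>n. s (f (g n)) j)" if "j \<in> S" for j
  proof -
    have "mono g" using g(1) strict_mono_mono by blast
    then show ?thesis using f(2) that by (auto simp: incseq_def mono_def)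
  qed
  ultimately show ?case using g(2) by blast
qed

lemma dickson:
  fixes s :: "nat \<Rightarrow> ('g::finite \<Rightarrow> nat)"
  shows "\<exists>i j. i < j \<and> s i \<le> s j"
proof -
  obtain f where f: "strict_mono f" "\<forall>j. incseq (\<lambda>n. s (f n) j)"
    using dickson_aux[of UNIV s] by auto
  have "f 0 < f 1" using f(1) by (simp add: strict_mono_def)
  moreover have "s (f 0) \<le> s (f 1)" using f(2) by (simp add: le_fun_def incseq_def)
  ultimately show ?thesis by blast
qed


definition box :: "'g set \<Rightarrow> ('g \<Rightarrow> nat) \<Rightarrow> ('g \<Rightarrow> nat) set" where
  "box J b = {\<alpha>. \<forall>j. j \<notin> J \<longrightarrow> \<alpha> j < b j}"

lemma box_inter:
  "box J b \<inter> {\<alpha>. \<alpha> j < m j} = box (J - {j}) (b(j := if j \<in> J then m j else min (b j) (m j)))"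
  unfolding box_def by auto

lemma avoid_boxes:
  fixes M :: "('g::finite \<Rightarrow> nat) set"
  assumes "finite M"
  shows "\<exists>F. finite F \<and> {\<alpha>. \<forall>m\<in>M. \<not> m \<le> \<alpha>} = (\<Union>(J,b)\<in>F. box J b)"
  using assms
proof (induction M rule: finite_induct)
  case empty
  show ?case by (rule exI[of _ "{(UNIV, \<lambda>_. 0)}"]) (auto simp: box_def)
next
  case (insert m M)
  then obtain F where F: "finite F" "{\<alpha>. \<forall>m\<in>M. \<not> m \<le> \<alpha>} = (\<Union>(J,b)\<in>F. box J b)" by blast
  define upd where "upd = (\<lambda>((J::'g set,b::'g \<Rightarrow> nat),j). (J - {j}, b(j := if j \<in> J then m j else min (b j) (m j))))"
  have "finite (upd ` (F \<times> UNIV))" using F(1) by simp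
  moreover have "{\<alpha>. \<forall>m'\<in>insert m M. \<not> m' \<le> \<alpha>} = (\<Union>(J,b)\<in>upd ` (F \<times> UNIV). box J b)"
  proof -
    have nle: "(\<not> m \<le> \<alpha>) \<longleftrightarrow> (\<exists>j. \<alpha> j < m j)" for \<alpha> by (auto simp: le_fun_def not_le)
    have "{\<alpha>. \<forall>m'\<in>insert m M. \<not> m' \<le> \<alpha>} = {\<alpha>. \<forall>m\<in>M. \<not> m \<le> \<alpha>} \<inter> (\<Union>j. {\<alpha>. \<alpha> j < m j})"
      using nle by auto
    also have "\<dots> = (\<Union>((J,b),j)\<in>F \<times> UNIV. box J b \<inter> {\<alpha>. \<alpha> j < m j})"
      unfolding F(2) by auto
    also have "\<dots> = (\<Union>((J,b),j)\<in>F \<times> UNIV. case upd ((J,b),j) of (J',b') \<Rightarrow> box J' b')"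
      unfolding box_inter upd_def by simp
    also have "\<dots> = (\<Union>(J,b)\<in>upd ` (F \<times> UNIV). box J b)"
      by (simp add: image_image case_prod_beta)
    finally show ?thesis .
  qed
  ultimately show ?case by blast
qed

lemma downclosed_boxes:
  fixes D :: "('g::finite \<Rightarrow> nat) set"
  assumes dc: "\<And>\<alpha> \<beta>. \<alpha> \<in> D \<Longrightarrow> \<beta> \<le> \<alpha> \<Longrightarrow> \<beta> \<in> D"
  shows "\<exists>F. finite F \<and> D = (\<Union>(J,b)\<in>F. box J b)"
proof -
  define U where "U = - D"
  define M where "M = {m\<in>U. \<forall>\<beta>\<in>U. \<beta> \<le> m \<longrightarrow> \<beta> = m}"
  have finM: "finite M"
  proof (rule ccontr)
    assume "infinite M"
    then obtain s :: "nat \<Rightarrow> _" where s: "inj s" "range s \<subseteq> M"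
      using infinite_countable_subset by blast
    obtain i j where ij: "i < j" "s i \<le> s j" using dickson by blast
    have "s j \<in> M" "s i \<in> M" using s(2) by auto
    then have "s i = s j" using ij(2) unfolding M_def by blast
    then show False using s(1) ij(1) by (auto dest: injD)
  qed
  have cover: "\<exists>m\<in>M. m \<le> \<alpha>" if aU: "\<alpha> \<in> U" for \<alpha>
  proof -
    obtain \<beta> where b: "\<beta> \<in> U \<and> \<beta> \<le> \<alpha>"
      and bmin: "\<forall>\<gamma>. \<gamma> \<in> U \<and> \<gamma> \<le> \<alpha> \<longrightarrow> sum \<beta> UNIV \<le> sum \<gamma> UNIV"
      using ex_has_least_nat[of "\<lambda>\<beta>. \<beta> \<in> U \<and> \<beta> \<le> \<alpha>" \<alpha> "\<lambda>\<beta>. sum \<beta> UNIV"] aU by auto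
    have "\<beta> \<in> M"
      unfolding M_def
    proof (intro CollectI conjI ballI impI)
      show "\<beta> \<in> U" using b by blast
      fix \<gamma> assume g: "\<gamma> \<in> U" "\<gamma> \<le> \<beta>"
      then have "sum \<beta> UNIV \<le> sum \<gamma> UNIV" using bmin b order_trans by blast
      show "\<gamma> = \<beta>"
      proof (rule ccontr)
        assume "\<gamma> \<noteq> \<beta>"
        then obtain j where "\<gamma> j \<noteq> \<beta> j" by auto
        then have "\<gamma> j < \<beta> j" using g(2) by (simp add: le_fun_def order_less_le)
        then have "sum \<gamma> UNIV < sum \<beta> UNIV"
          using g(2) by (intro sum_strict_mono_ex1) (auto simp: le_fun_def)
        then show False using \<open>sum \<beta> UNIV \<le> sum \<gamma> UNIV\<close> by simp
      qed
    qed
    then show ?thesis using b by blast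
  qed
  have "D = {\<alpha>. \<forall>m\<in>M. \<not> m \<le> \<alpha>}"
  proof (intro set_eqI iffI)
    fix \<alpha> assume "\<alpha> \<in> D"
    then show "\<alpha> \<in> {\<alpha>. \<forall>m\<in>M. \<not> m \<le> \<alpha>}" using dc unfolding M_def U_def by blast
  next
    fix \<alpha> assume "\<alpha> \<in> {\<alpha>. \<forall>m\<in>M. \<not> m \<le> \<alpha>}"
    then show "\<alpha> \<in> D" using cover unfolding U_def by blast
  qed
  then show ?thesis using avoid_boxes[OF finM] by simp
qed


definition evlin :: "('a \<Rightarrow> nat) \<Rightarrow> (int \<Rightarrow> ereal) \<Rightarrow> bool" where
  "evlin d h \<longleftrightarrow> (\<exists>v0::int. (\<forall>v\<ge>v0. h v = -\<infinity>) \<or>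
      (\<exists>\<delta>\<in>d ` UNIV. \<exists>c::int. \<forall>v\<ge>v0. h v = ereal (of_int (int \<delta> * v + c))))"

lemma lin_dom:
  fixes v c1 c2 :: int and d1 d2 :: nat
  assumes "d2 < d1" "v \<ge> 0" "v \<ge> c2 - c1"
  shows "int d2 * v + c2 \<le> int d1 * v + c1"
proof -
  have "(int d1 - int d2 - 1) * v \<ge> 0" using assms by simp
  then show ?thesis using assms by (simp add: algebra_simps)
qed

lemma evlin_sup:
  assumes h1: "evlin d h1" and h2: "evlin d h2"
  shows "evlin d (\<lambda>v. sup (h1 v) (h2 v))"
proof -
  obtain v1 where A1: "(\<forall>v\<ge>v1. h1 v = -\<infinity>) \<or>
      (\<exists>\<delta>\<in>d ` UNIV. \<exists>c::int. \<forall>v\<ge>v1. h1 v = ereal (of_int (int \<delta> * v + c)))"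
    using h1 unfolding evlin_def by blast
  obtain v2 where A2: "(\<forall>v\<ge>v2. h2 v = -\<infinity>) \<or>
      (\<exists>\<delta>\<in>d ` UNIV. \<exists>c::int. \<forall>v\<ge>v2. h2 v = ereal (of_int (int \<delta> * v + c)))"
    using h2 unfolding evlin_def by blast
  show ?thesis
  proof (cases "\<forall>v\<ge>v1. h1 v = -\<infinity>")
    case True
    then have "\<forall>v\<ge>max v1 v2. sup (h1 v) (h2 v) = h2 v" by simp
    then show ?thesis unfolding evlin_def using A2
      by (intro exI[of _ "max v1 v2"]) (metis max.cobounded2 order_trans)
  next
    case F1: False
    then obtain \<delta>1 c1 where L1: "\<delta>1 \<in> d ` UNIV" "\<forall>v\<ge>v1. h1 v = ereal (of_int (int \<delta>1 * v + c1))"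
      using A1 by blast
    show ?thesis
    proof (cases "\<forall>v\<ge>v2. h2 v = -\<infinity>")
      case True
      then have "\<forall>v\<ge>max v1 v2. sup (h1 v) (h2 v) = h1 v" by simp
      then show ?thesis unfolding evlin_def using L1
        by (intro exI[of _ "max v1 v2"]) (metis max.cobounded1 order_trans)
    next
      case False
      then obtain \<delta>2 c2 where L2: "\<delta>2 \<in> d ` UNIV" "\<forall>v\<ge>v2. h2 v = ereal (of_int (int \<delta>2 * v + c2))"
        using A2 by blast
      define w where "w = max (max v1 v2) (max 0 (max (c2 - c1) (c1 - c2)))"
      have hv: "h1 v = ereal (of_int (int \<delta>1 * v + c1)) \<and> h2 v = ereal (of_int (int \<delta>2 * v + c2))
          \<and> v \<ge> 0 \<and> v \<ge> c2 - c1 \<and> v \<ge> c1 - c2" if "v \<ge> w" for v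
        using L1(2) L2(2) that unfolding w_def by auto
      consider "\<delta>2 < \<delta>1" | "\<delta>1 < \<delta>2" | "\<delta>1 = \<delta>2" by linarith
      then show ?thesis
      proof cases
        case 1
        have "\<forall>v\<ge>w. sup (h1 v) (h2 v) = ereal (of_int (int \<delta>1 * v + c1))"
        proof (intro allI impI)
          fix v assume "v \<ge> w"
          note hv = hv[OF this]
          have "int \<delta>2 * v + c2 \<le> int \<delta>1 * v + c1" using lin_dom[OF 1] hv by blast
          then have "h2 v \<le> h1 v" using hv by (simp only: ereal_less_eq of_int_le_iff)
          then show "sup (h1 v) (h2 v) = ereal (of_int (int \<delta>1 * v + c1))" using hv by (simp only: sup.absorb1)
        qed
        then show ?thesis unfolding evlin_def using L1(1) by blast
      next
        case 2
        have "\<forall>v\<ge>w. sup (h1 v) (h2 v) = ereal (of_int (int \<delta>2 * v + c2))"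
        proof (intro allI impI)
          fix v assume "v \<ge> w"
          note hv = hv[OF this]
          have "int \<delta>1 * v + c1 \<le> int \<delta>2 * v + c2" using lin_dom[OF 2] hv by blast
          then have "h1 v \<le> h2 v" using hv by (simp only: ereal_less_eq of_int_le_iff)
          then show "sup (h1 v) (h2 v) = ereal (of_int (int \<delta>2 * v + c2))" using hv by (simp only: sup.absorb2)
        qed
        then show ?thesis unfolding evlin_def using L2(1) by blast
      next
        case 3
        have "\<forall>v\<ge>w. sup (h1 v) (h2 v) = ereal (of_int (int \<delta>1 * v + max c1 c2))"
        proof (intro allI impI)
          fix v assume "v \<ge> w"
          note hv = hv[OF this]
          show "sup (h1 v) (h2 v) = ereal (of_int (int \<delta>1 * v + max c1 c2))"
          proof (cases "c1 \<le> c2")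
            case True
            then have "h1 v \<le> h2 v" using hv 3 by (simp only: ereal_less_eq of_int_le_iff add_left_mono)
            then show ?thesis using hv 3 True by (simp only: sup.absorb2 max_absorb2)
          next
            case False
            then have "h2 v \<le> h1 v" using hv 3 by (simp only: ereal_less_eq of_int_le_iff add_left_mono)
            then show ?thesis using hv 3 False by (simp only: sup.absorb1 max_absorb1)
          qed
        qed
        then show ?thesis unfolding evlin_def using L1(1) by blast
      qed
    qed
  qed
qed

lemma evlin_SUP:
  assumes "finite I" "\<And>i. i \<in> I \<Longrightarrow> evlin d (h i)"
  shows "evlin d (\<lambda>v. SUP i\<in>I. h i v)"
  using assms
proof (induction I rule: finite_induct)
  case empty
  show ?case unfolding evlin_def by (simp add: bot_ereal_def)
next
  case (insert x I)
  have "evlin d (\<lambda>v. sup (h x v) (SUP i\<in>I. h i v))"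
    using insert by (intro evlin_sup) auto
  then show ?case by simp
qed


lemma sum_upd_UNIV:
  fixes f :: "'g::finite \<Rightarrow> 'a" and g :: "'a \<Rightarrow> int"
  shows "(\<Sum>j\<in>UNIV. g ((f(js := t)) j)) = (\<Sum>j\<in>UNIV. g (f j)) - g (f js) + g t"
proof -
  have "(\<Sum>j\<in>UNIV. g ((f(js := t)) j)) = g t + (\<Sum>j\<in>UNIV - {js}. g ((f(js := t)) j))"
    by (subst sum.remove[of UNIV js]) auto
  also have "(\<Sum>j\<in>UNIV - {js}. g ((f(js := t)) j)) = (\<Sum>j\<in>UNIV - {js}. g (f j))"
    by (rule sum.cong) auto
  also have "(\<Sum>j\<in>UNIV. g (f j)) = g (f js) + (\<Sum>j\<in>UNIV - {js}. g (f j))"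
    by (subst sum.remove[of UNIV js]) auto
  ultimately show ?thesis by simp
qed

lemma evlin_box:
  fixes d :: "'g::finite \<Rightarrow> nat" and a e :: int
  shows "evlin d (\<lambda>v. Sup {ereal (of_int (a + (\<Sum>j\<in>UNIV. int (\<alpha> j) * int (d j)))) | \<alpha>.
            \<alpha> \<in> box J b \<and> e + (\<Sum>j\<in>UNIV. int (\<alpha> j)) = v})"
    (is "evlin d (\<lambda>v. Sup (?S v))")
proof -
  consider (empty) "\<exists>j. j \<notin> J \<and> b j = 0" | (fin) "\<not> (\<exists>j. j \<notin> J \<and> b j = 0)" "J = {}"
    | (lin) "\<forall>j. j \<notin> J \<longrightarrow> b j \<ge> 1" "J \<noteq> {}" by force
  then show ?thesis
  proof cases
    case empty
    then have "box J b = {}" unfolding box_def by force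
    then have e: "?S v = {}" for v by simp
    have "Sup (?S v) = -\<infinity>" for v by (simp only: e Sup_empty bot_ereal_def)
    then show ?thesis unfolding evlin_def by blast
  next
    case fin
    have "?S v = {}" if "v \<ge> e + (\<Sum>j\<in>UNIV. int (b j)) + 1" for v
    proof -
      have "e + (\<Sum>j\<in>UNIV. int (\<alpha> j)) \<noteq> v" if "\<alpha> \<in> box J b" for \<alpha>
      proof -
        have "(\<Sum>j\<in>UNIV. int (\<alpha> j)) \<le> (\<Sum>j\<in>UNIV. int (b j))"
          using \<open>\<alpha> \<in> box J b\<close> fin(2) unfolding box_def by (intro sum_mono) (simp add: less_imp_le)
        then show ?thesis using \<open>v \<ge> _\<close> by simp
      qed
      then show ?thesis by auto
    qed
    then have "Sup (?S v) = -\<infinity>" if "v \<ge> e + (\<Sum>j\<in>UNIV. int (b j)) + 1" for v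
      using that by (simp only: Sup_empty bot_ereal_def)
    then show ?thesis unfolding evlin_def by blast
  next
    case lin
    define \<delta> where "\<delta> = Max (d ` J)"
    have "\<delta> \<in> d ` J" unfolding \<delta>_def using lin(2) by (intro Max_in) auto
    then obtain js where js: "js \<in> J" "d js = \<delta>" by auto
    have dle: "d j \<le> \<delta>" if "j \<in> J" for j unfolding \<delta>_def using that by (intro Max_ge) auto
    define C where "C = (\<Sum>j\<in>UNIV. (if j \<in> J then 0 else max (int (d j) - int \<delta>) 0 * (int (b j) - 1)))"
    define v0 where "v0 = e + (\<Sum>j\<in>UNIV. int (b j))"
    have main: "Sup (?S v) = ereal (of_int (int \<delta> * v + (a - int \<delta> * e + C)))" if "v \<ge> v0" for v
    proof (rule antisym)
      show "Sup (?S v) \<le> ereal (of_int (int \<delta> * v + (a - int \<delta> * e + C)))"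
      proof (rule Sup_least)
        fix x assume "x \<in> ?S v"
        then obtain \<alpha> where x: "x = ereal (of_int (a + (\<Sum>j\<in>UNIV. int (\<alpha> j) * int (d j))))"
          and \<alpha>: "\<alpha> \<in> box J b" "e + (\<Sum>j\<in>UNIV. int (\<alpha> j)) = v" by blast
        have pj: "int (\<alpha> j) * (int (d j) - int \<delta>) \<le> (if j \<in> J then 0 else max (int (d j) - int \<delta>) 0 * (int (b j) - 1))" for j
        proof (cases "j \<in> J")
          case True
          then show ?thesis using dle[OF True] by (simp add: mult_nonneg_nonpos)
        next
          case False
          then have "\<alpha> j < b j" using \<alpha>(1) unfolding box_def by blast
          then have ab: "int (\<alpha> j) \<le> int (b j) - 1" by simp
          have "int (\<alpha> j) * (int (d j) - int \<delta>) \<le> int (\<alpha> j) * max (int (d j) - int \<delta>) 0"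
            by (intro mult_left_mono) auto
          also have "\<dots> \<le> (int (b j) - 1) * max (int (d j) - int \<delta>) 0"
            using ab by (intro mult_right_mono) auto
          finally show ?thesis using False by (simp add: mult.commute)
        qed
        have "(\<Sum>j\<in>UNIV. int (\<alpha> j) * int (d j)) - int \<delta> * (\<Sum>j\<in>UNIV. int (\<alpha> j))
            = (\<Sum>j\<in>UNIV. int (\<alpha> j) * (int (d j) - int \<delta>))"
          by (simp add: sum_distrib_left sum_subtractf algebra_simps)
        also have "\<dots> \<le> C" unfolding C_def by (intro sum_mono pj)
        finally have "a + (\<Sum>j\<in>UNIV. int (\<alpha> j) * int (d j)) \<le> int \<delta> * v + (a - int \<delta> * e + C)"
          unfolding \<alpha>(2)[symmetric] by (simp add: algebra_simps)
        then show "x \<le> ereal (of_int (int \<delta> * v + (a - int \<delta> * e + C)))"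
          unfolding x by (simp only: ereal_less_eq of_int_le_iff)
      qed
    next
      define \<alpha>0 where "\<alpha>0 j = (if j \<notin> J \<and> d j > \<delta> then b j - 1 else 0)" for j
      define t where "t = nat (v - e - (\<Sum>j\<in>UNIV. int (\<alpha>0 j)))"
      define \<alpha> where "\<alpha> = \<alpha>0(js := t)"
      have a0js: "\<alpha>0 js = 0" using js unfolding \<alpha>0_def by simp
      have "(\<Sum>j\<in>UNIV. int (\<alpha>0 j)) \<le> (\<Sum>j\<in>UNIV. int (b j))"
        unfolding \<alpha>0_def by (intro sum_mono) auto
      then have tge: "int t = v - e - (\<Sum>j\<in>UNIV. int (\<alpha>0 j))"
        using that unfolding t_def v0_def by simp
      have s2: "(\<Sum>j\<in>UNIV. int (\<alpha> j)) = (\<Sum>j\<in>UNIV. int (\<alpha>0 j)) + int t"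
        unfolding \<alpha>_def using sum_upd_UNIV[of "\<lambda>x. int x" \<alpha>0 js t] a0js by simp
      have s1: "(\<Sum>j\<in>UNIV. int (\<alpha> j) * int (d j)) = (\<Sum>j\<in>UNIV. int (\<alpha>0 j) * int (d j)) + int t * int \<delta>"
      proof -
        have "(\<Sum>j\<in>UNIV. int (\<alpha> j) * int (d j)) = (\<Sum>j\<in>UNIV. (\<lambda>(x,y). int x * int y) (((\<lambda>j. (\<alpha>0 j, d j))(js := (t, d js))) j))"
          unfolding \<alpha>_def by (intro sum.cong) auto
        also have "\<dots> = (\<Sum>j\<in>UNIV. int (\<alpha>0 j) * int (d j)) + int t * int \<delta>"
          by (subst sum_upd_UNIV) (simp add: a0js js)
        finally show ?thesis .
      qed
      have pj: "int (\<alpha>0 j) * (int (d j) - int \<delta>) = (if j \<in> J then 0 else max (int (d j) - int \<delta>) 0 * (int (b j) - 1))" for j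
        using lin(1) unfolding \<alpha>0_def by (auto simp: of_nat_diff)
      have "(\<Sum>j\<in>UNIV. int (\<alpha>0 j) * int (d j)) - int \<delta> * (\<Sum>j\<in>UNIV. int (\<alpha>0 j))
            = (\<Sum>j\<in>UNIV. int (\<alpha>0 j) * (int (d j) - int \<delta>))"
        by (simp add: sum_distrib_left sum_subtractf algebra_simps)
      also have "\<dots> = C" unfolding C_def by (intro sum.cong refl pj)
      finally have val: "a + (\<Sum>j\<in>UNIV. int (\<alpha> j) * int (d j)) = int \<delta> * v + (a - int \<delta> * e + C)"
        using s1 tge by (simp add: algebra_simps)
      have inbox: "\<alpha> \<in> box J b"
        unfolding box_def \<alpha>_def \<alpha>0_def using js(1) lin(1) by auto
      have "e + (\<Sum>j\<in>UNIV. int (\<alpha> j)) = v" using s2 tge by simp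
      then have "ereal (of_int (int \<delta> * v + (a - int \<delta> * e + C))) \<in> ?S v"
        using inbox val by (metis (mono_tags, lifting) mem_Collect_eq)
      then show "ereal (of_int (int \<delta> * v + (a - int \<delta> * e + C))) \<le> Sup (?S v)"
        by (rule Sup_upper)
    qed
    show ?thesis unfolding evlin_def
      by (intro exI[of _ v0] disjI2 bexI[of _ \<delta>] exI[of _ "a - int \<delta> * e + C"])
         (use main js in auto)
  qed
qed


lemma module_const:
  assumes "module (sc :: (('g \<Rightarrow>\<^sub>0 nat) \<Rightarrow>\<^sub>0 'r::comm_ring_1) \<Rightarrow> 'm::ab_group_add \<Rightarrow> 'm)"
  shows "module (\<lambda>a. sc (const a))"
proof
  interpret module sc by (rule assms)
  fix a b :: 'r and x y :: 'm
  show "sc (const a) (x + y) = sc (const a) x + sc (const a) y" by (rule scale_right_distrib)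
  show "sc (const (a + b)) x = sc (const a) x + sc (const b) x"
    unfolding const_def single_add by (rule scale_left_distrib)
  show "sc (const a) (sc (const b) x) = sc (const (a * b)) x"
    unfolding const_def by (simp add: mult_single)
  show "sc (const 1) x = x" unfolding const_def by simp
qed

lemma decomp_component:
  assumes gm: "graded_module d sc Nc" and fin: "finite T"
    and w: "\<And>t. t \<in> T \<Longrightarrow> w t \<in> Nc (\<kappa> t)"
    and y: "y = (\<Sum>t\<in>T. w t)" "y \<in> Nc k0" "y \<noteq> 0"
  shows "\<exists>t\<in>T. \<kappa> t = k0 \<and> w t \<noteq> 0"
proof -
  have sub: "\<And>k. module.subspace (\<lambda>a. sc (const a)) (Nc k)"
    using gm[unfolded graded_module_def, THEN conjunct2, THEN conjunct1] by blast
  have uniq: "\<And>x. \<exists>!h. finite {k. h k \<noteq> 0} \<and> (\<forall>k. h k \<in> Nc k) \<and> x = (\<Sum>k\<in>{k. h k \<noteq> 0}. h k)"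
    using gm[unfolded graded_module_def, THEN conjunct2, THEN conjunct2, THEN conjunct1] by blast
  have mc: "module (\<lambda>a. sc (const a))"
    using gm[unfolded graded_module_def, THEN conjunct1] by (rule module_const)
  have zero: "0 \<in> Nc k" for k using sub[of k] unfolding module.subspace_def[OF mc] by blast
  have addc: "x + z \<in> Nc k" if "x \<in> Nc k" "z \<in> Nc k" for x z k
    using sub[of k] that unfolding module.subspace_def[OF mc] by blast
  have sumc: "(\<Sum>t\<in>A. f t) \<in> Nc k" if "finite A" "\<And>t. t \<in> A \<Longrightarrow> f t \<in> Nc k" for A f k
    using that by (induction A rule: finite_induct) (auto intro: zero addc)
  define h where "h k = (\<Sum>t\<in>{t\<in>T. \<kappa> t = k}. w t)" for k
  have h1: "h k \<in> Nc k" for k unfolding h_def using fin w by (intro sumc) auto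
  have hsub: "{k. h k \<noteq> 0} \<subseteq> \<kappa> ` T"
  proof
    fix k assume "k \<in> {k. h k \<noteq> 0}"
    then have "{t\<in>T. \<kappa> t = k} \<noteq> {}" unfolding h_def by force
    then show "k \<in> \<kappa> ` T" by blast
  qed
  have h2: "finite {k. h k \<noteq> 0}" using finite_subset[OF hsub] fin by simp
  have "y = (\<Sum>k\<in>\<kappa> ` T. h k)" unfolding y(1) h_def using fin by (rule sum.image_gen)
  also have "\<dots> = (\<Sum>k\<in>{k. h k \<noteq> 0}. h k)"
    using hsub fin by (intro sum.mono_neutral_right) auto
  finally have h3: "y = (\<Sum>k\<in>{k. h k \<noteq> 0}. h k)" .
  define h' where "h' k = (if k = k0 then y else 0)" for k
  have "{k. h' k \<noteq> 0} = {k0}" unfolding h'_def using y(3) by auto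
  then have h'1: "finite {k. h' k \<noteq> 0}" "y = (\<Sum>k\<in>{k. h' k \<noteq> 0}. h' k)"
    by (auto simp: h'_def)
  have h'2: "h' k \<in> Nc k" for k unfolding h'_def using y(2) zero by auto
  have "(THE g. finite {k. g k \<noteq> 0} \<and> (\<forall>k. g k \<in> Nc k) \<and> y = (\<Sum>k\<in>{k. g k \<noteq> 0}. g k)) = h"
    using h1 h2 h3 by (intro the1_equality[OF uniq[of y]]) simp
  moreover have "(THE g. finite {k. g k \<noteq> 0} \<and> (\<forall>k. g k \<in> Nc k) \<and> y = (\<Sum>k\<in>{k. g k \<noteq> 0}. g k)) = h'"
    using h'1 h'2 by (intro the1_equality[OF uniq[of y]]) simp
  ultimately have "h = h'" by simp
  then have "h k0 = y" unfolding h'_def by (auto dest: fun_cong[of _ _ k0])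
  then have "(\<Sum>t\<in>{t\<in>T. \<kappa> t = k0}. w t) \<noteq> 0" using y(3) unfolding h_def by simp
  then obtain t where "t \<in> {t\<in>T. \<kappa> t = k0}" "w t \<noteq> 0" by (meson sum.neutral)
  then show ?thesis by blast
qed

theorem lemma3p3:
  fixes d :: "'g::finite \<Rightarrow> nat"
    and sc :: "(('g \<Rightarrow>\<^sub>0 nat) \<Rightarrow>\<^sub>0 'r::comm_ring_1) \<Rightarrow> 'm::ab_group_add \<Rightarrow> 'm"
    and Nc :: "int \<times> int \<Rightarrow> 'm set"
  assumes "noetherian TYPE('r)"
    and "graded_module d sc Nc"
    and "finitely_generated sc"
  shows "\<exists>v0::int. (\<forall>v\<ge>v0. rho Nc v = -\<infinity>) \<or>
           (\<exists>\<delta>\<in>d ` UNIV. \<exists>c::int. \<forall>v\<ge>v0. rho Nc v = ereal (of_int (int \<delta> * v + c)))"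
proof -
  have mod: "module sc" using assms(2)[unfolded graded_module_def, THEN conjunct1] .
  have sub: "\<And>k. module.subspace (\<lambda>a. sc (const a)) (Nc k)"
    using assms(2)[unfolded graded_module_def, THEN conjunct2, THEN conjunct1] by blast
  have uniq: "\<And>x. \<exists>!h. finite {k. h k \<noteq> 0} \<and> (\<forall>k. h k \<in> Nc k) \<and> x = (\<Sum>k\<in>{k. h k \<noteq> 0}. h k)"
    using assms(2)[unfolded graded_module_def, THEN conjunct2, THEN conjunct2, THEN conjunct1] by blast
  have grad: "\<And>p x a b. p \<in> Ahom d a \<Longrightarrow> x \<in> Nc b \<Longrightarrow> sc p x \<in> Nc (fst a + fst b, snd a + snd b)"
    using assms(2)[unfolded graded_module_def, THEN conjunct2, THEN conjunct2, THEN conjunct2] by blast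
  have mc: "module (\<lambda>a. sc (const a))" using mod by (rule module_const)
  have zero: "0 \<in> Nc k" for k using sub[of k] unfolding module.subspace_def[OF mc] by blast
  obtain F where F: "finite F" "module.span sc F = UNIV"
    using assms(3) unfolding finitely_generated_def by blast
  define H where "H x = (THE h. finite {k. h k \<noteq> 0} \<and> (\<forall>k. h k \<in> Nc k) \<and> x = (\<Sum>k\<in>{k. h k \<noteq> 0}. h k))" for x
  have H: "finite {k. H x k \<noteq> 0} \<and> (\<forall>k. H x k \<in> Nc k) \<and> x = (\<Sum>k\<in>{k. H x k \<noteq> 0}. H x k)" for x
    unfolding H_def by (fact theI'[OF uniq[of x]])
  define Gs where "Gs = (\<Union>x\<in>F. H x ` {k. H x k \<noteq> 0})"
  have finG: "finite Gs" unfolding Gs_def using F(1) H by blast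
  have Gdeg: "\<exists>k. z \<in> Nc k" if "z \<in> Gs" for z using that H unfolding Gs_def by blast
  define kd where "kd z = (SOME k. z \<in> Nc k)" for z
  have kd: "z \<in> Nc (kd z)" if "z \<in> Gs" for z unfolding kd_def using Gdeg[OF that] by (rule someI_ex)
  have spanG: "module.span sc Gs = UNIV"
  proof -
    have "F \<subseteq> module.span sc Gs"
    proof
      fix x assume "x \<in> F"
      have "(\<Sum>k\<in>{k. H x k \<noteq> 0}. H x k) \<in> module.span sc Gs"
        by (intro module.span_sum[OF mod] module.span_base[OF mod]) (use \<open>x \<in> F\<close> in \<open>auto simp: Gs_def\<close>)
      moreover have "x = (\<Sum>k\<in>{k. H x k \<noteq> 0}. H x k)" using H[of x] by blast
      ultimately show "x \<in> module.span sc Gs" by metis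
    qed
    then have "module.span sc F \<subseteq> module.span sc Gs"
      using module.span_minimal[OF mod] module.subspace_span[OF mod] by blast
    then show ?thesis using F(2) by blast
  qed
  define Y where "Y f = Poly_Mapping.single (Abs_poly_mapping f) (1::'r)" for f :: "'g \<Rightarrow> nat"
  define s1 where "s1 f = (\<Sum>j\<in>UNIV. int (f j) * int (d j))" for f :: "'g \<Rightarrow> nat"
  define s2 where "s2 f = (\<Sum>j\<in>UNIV. int (f j))" for f :: "'g \<Rightarrow> nat"
  define D where "D z = {f. sc (Y f) z \<noteq> 0}" for z
  have md: "monodeg d (Abs_poly_mapping f) = (s1 f, s2 f)" for f
    unfolding monodeg_def s1_def s2_def by simp
  have single_hom: "Poly_Mapping.single \<alpha> c \<in> Ahom d (monodeg d \<alpha>)" for \<alpha> and c :: 'r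
    unfolding Ahom_def by simp
  have rho_eq: "{i. Nc (i, v) \<noteq> {0}} = {fst (kd z) + s1 f | z f. z \<in> Gs \<and> f \<in> D z \<and> snd (kd z) + s2 f = v}" for v
  proof (intro set_eqI iffI)
    fix i assume "i \<in> {i. Nc (i, v) \<noteq> {0}}"
    then have ne: "Nc (i, v) \<noteq> {0}" by simp
    obtain y where y: "y \<in> Nc (i, v)" "y \<noteq> 0" using ne zero by blast
    have "y \<in> module.span sc Gs" using spanG by simp
    then obtain u where u: "y = (\<Sum>z\<in>Gs. sc (u z) z)"
      using module.span_finite[OF mod finG] by blast
    define T where "T = Sigma Gs (\<lambda>z. Poly_Mapping.keys (u z))"
    define w where "w = (\<lambda>(z,\<alpha>). sc (Poly_Mapping.single \<alpha> (Poly_Mapping.lookup (u z) \<alpha>)) z)"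
    define \<kappa> where "\<kappa> = (\<lambda>(z,\<alpha>). (fst (monodeg d \<alpha>) + fst (kd z), snd (monodeg d \<alpha>) + snd (kd z)))"
    have finT: "finite T" unfolding T_def using finG by auto
    have yT: "y = (\<Sum>t\<in>T. w t)"
    proof -
      have "sc (u z) z = (\<Sum>\<alpha>\<in>Poly_Mapping.keys (u z). sc (Poly_Mapping.single \<alpha> (Poly_Mapping.lookup (u z) \<alpha>)) z)" for z
      proof -
        have eq: "u z = (\<Sum>\<alpha>\<in>Poly_Mapping.keys (u z). Poly_Mapping.single \<alpha> (Poly_Mapping.lookup (u z) \<alpha>))"
          by (rule poly_mapping_eqI) (auto simp: lookup_sum lookup_single when_def in_keys_iff)
        have "sc (u z) z = sc (\<Sum>\<alpha>\<in>Poly_Mapping.keys (u z). Poly_Mapping.single \<alpha> (Poly_Mapping.lookup (u z) \<alpha>)) z"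
          using eq by (rule arg_cong[where f="\<lambda>p. sc p z"])
        then show ?thesis by (simp only: module.scale_sum_left[OF mod])
      qed
      then have "y = (\<Sum>z\<in>Gs. \<Sum>\<alpha>\<in>Poly_Mapping.keys (u z). sc (Poly_Mapping.single \<alpha> (Poly_Mapping.lookup (u z) \<alpha>)) z)"
        using u by simp
      also have "\<dots> = (\<Sum>t\<in>T. w t)" unfolding T_def w_def using finG by (subst sum.Sigma) auto
      finally show ?thesis .
    qed
    have wT: "w t \<in> Nc (\<kappa> t)" if "t \<in> T" for t
    proof -
      obtain z \<alpha> where t: "t = (z, \<alpha>)" "z \<in> Gs" using \<open>t \<in> T\<close> unfolding T_def by blast
      show ?thesis unfolding t w_def \<kappa>_def using grad[OF single_hom kd[OF t(2)]] by simp
    qed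
    obtain t where t: "t \<in> T" "\<kappa> t = (i, v)" "w t \<noteq> 0"
      using decomp_component[OF assms(2) finT wT yT y] by blast
    obtain z \<alpha> where za: "t = (z, \<alpha>)" "z \<in> Gs" using \<open>t \<in> T\<close> unfolding T_def by blast
    define f where "f = Poly_Mapping.lookup \<alpha>"
    have af: "Abs_poly_mapping f = \<alpha>" unfolding f_def by simp
    have "sc (Y f) z \<noteq> 0"
    proof
      assume 0: "sc (Y f) z = 0"
      have "w t = sc (Poly_Mapping.single 0 (Poly_Mapping.lookup (u z) \<alpha>) * Y f) z"
        unfolding za w_def Y_def af by (simp add: mult_single)
      also have "\<dots> = 0" using 0 by (simp add: module.scale_scale[OF mod, symmetric] module.scale_zero_right[OF mod])
      finally show False using t(3) by simp
    qed
    then have "f \<in> D z" unfolding D_def by simp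
    moreover have "i = fst (kd z) + s1 f" "snd (kd z) + s2 f = v"
      using t(2) md[of f] unfolding za \<kappa>_def af by auto
    ultimately show "i \<in> {fst (kd z) + s1 f | z f. z \<in> Gs \<and> f \<in> D z \<and> snd (kd z) + s2 f = v}"
      using za(2) by blast
  next
    fix i assume "i \<in> {fst (kd z) + s1 f | z f. z \<in> Gs \<and> f \<in> D z \<and> snd (kd z) + s2 f = v}"
    then obtain z f where zf: "z \<in> Gs" "f \<in> D z" "i = fst (kd z) + s1 f" "snd (kd z) + s2 f = v" by blast
    have "sc (Y f) z \<in> Nc (i, v)"
      using grad[OF single_hom kd[OF zf(1)], of "Abs_poly_mapping f" 1] zf(3,4) unfolding md Y_def
      by (simp add: add.commute)
    moreover have "sc (Y f) z \<noteq> 0" using zf(2) unfolding D_def by simp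
    ultimately show "i \<in> {i. Nc (i, v) \<noteq> {0}}" by auto
  qed
  have dc: "g \<in> D z" if "f \<in> D z" "g \<le> f" for f g z
  proof -
    have "Abs_poly_mapping (f - g) + Abs_poly_mapping g = Abs_poly_mapping f"
      using that(2) by (intro poly_mapping_eqI) (simp add: lookup_add le_fun_def)
    then have "Y f = Y (f - g) * Y g" unfolding Y_def by (simp add: mult_single)
    then have "sc (Y f) z = sc (Y (f - g)) (sc (Y g) z)" by (simp add: module.scale_scale[OF mod])
    then show ?thesis using that(1) unfolding D_def by (auto simp: module.scale_zero_right[OF mod])
  qed
  have "\<forall>z. \<exists>B. finite B \<and> D z = (\<Union>(J,b)\<in>B. box J b)"
  proof
    fix z show "\<exists>B. finite B \<and> D z = (\<Union>(J,b)\<in>B. box J b)"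
      by (rule downclosed_boxes) (erule dc)
  qed
  from choice[OF this] obtain Fz where Fz0: "\<forall>z. finite (Fz z) \<and> D z = (\<Union>(J,b)\<in>Fz z. box J b)"
    by blast
  have Fz: "\<And>z. finite (Fz z)" "\<And>z. D z = (\<Union>(J,b)\<in>Fz z. box J b)" using Fz0 by simp_all
  define I where "I = Sigma Gs Fz"
  define S where "S = (\<lambda>(z,(J,b)) v. {ereal (of_int (fst (kd z) + s1 f)) | f. f \<in> box J b \<and> snd (kd z) + s2 f = v})"
  have Sd: "S (z, (J, b)) v = {ereal (of_int (fst (kd z) + s1 f)) | f. f \<in> box J b \<and> snd (kd z) + s2 f = v}" for z J b v
    unfolding S_def by simp
  have rhoS: "rho Nc v = (SUP i\<in>I. Sup (S i v))" for v
  proof -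
    have "(\<lambda>i. ereal (of_int i)) ` {i. Nc (i, v) \<noteq> {0}} = (\<Union>i\<in>I. S i v)"
    proof (intro equalityI subsetI)
      fix x assume "x \<in> (\<lambda>i. ereal (of_int i)) ` {i. Nc (i, v) \<noteq> {0}}"
      then obtain z f where zf: "x = ereal (of_int (fst (kd z) + s1 f))" "z \<in> Gs" "f \<in> D z" "snd (kd z) + s2 f = v"
        unfolding rho_eq by blast
      obtain J b where Jb: "(J, b) \<in> Fz z" "f \<in> box J b" using zf(3) unfolding Fz(2) by blast
      have "(z, (J, b)) \<in> I" unfolding I_def using zf(2) Jb(1) by blast
      moreover have "x \<in> S (z, (J, b)) v" unfolding Sd using zf(1,4) Jb(2) by blast
      ultimately show "x \<in> (\<Union>i\<in>I. S i v)" by blast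
    next
      fix x assume "x \<in> (\<Union>i\<in>I. S i v)"
      then obtain z J b where zJb: "(z, (J, b)) \<in> I" "x \<in> S (z, (J, b)) v" by (metis UN_E prod.exhaust)
      then obtain f where f: "x = ereal (of_int (fst (kd z) + s1 f))" "f \<in> box J b" "snd (kd z) + s2 f = v"
        unfolding Sd by blast
      have z: "z \<in> Gs" "(J, b) \<in> Fz z" using zJb(1) unfolding I_def by blast+
      have "f \<in> D z" unfolding Fz(2) using z(2) f(2) by blast
      then have "fst (kd z) + s1 f \<in> {i. Nc (i, v) \<noteq> {0}}" unfolding rho_eq using z(1) f(3) by blast
      then show "x \<in> (\<lambda>i. ereal (of_int i)) ` {i. Nc (i, v) \<noteq> {0}}" using f(1) by blast
    qed
    then have "rho Nc v = Sup (\<Union>i\<in>I. S i v)" unfolding rho_def by simp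
    also have "\<dots> = (SUP x\<in>(\<Union>i\<in>I. S i v). x)" by simp
    also have "\<dots> = (SUP i\<in>I. SUP x\<in>S i v. x)" by (rule SUP_UNION)
    also have "\<dots> = (SUP i\<in>I. Sup (S i v))" by simp
    finally show ?thesis .
  qed
  have "evlin d (\<lambda>v. SUP i\<in>I. Sup (S i v))"
  proof (rule evlin_SUP)
    show "finite I" unfolding I_def using finG Fz(1) by auto
    fix i assume "i \<in> I"
    then obtain z J b where i: "i = (z, (J, b))" by (metis prod.exhaust)
    show "evlin d (\<lambda>v. Sup (S i v))"
      unfolding i S_def s1_def s2_def by (simp only: case_prod_conv) (rule evlin_box)
  qed
  moreover have "rho Nc = (\<lambda>v. SUP i\<in>I. Sup (S i v))" by (intro ext) (rule rhoS)
  ultimately have "evlin d (rho Nc)" by simp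
  then show ?thesis unfolding evlin_def by blast
qed

end
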